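(* Let $\Gamma$ be a group and $\phi:\Gamma\to\mathbb R$ a homogeneous quasimorphism which is not a homomorphism. Let $\mu=\exp(2\pi i\phi):\Gamma\to S^1=U(1)$. Then $\frac{3}{\pi}\arcsin\frac{D(\mu)}{2}+\|d\phi\|_\infty\ge1$.
   Context: A quasimorphism is a function $\phi:\Gamma\to\mathbb R$ with $d\phi(\gamma,\eta)=\phi(\gamma\eta)-\phi(\gamma)-\phi(\eta)$ bounded on $\Gamma\times\Gamma$; $\|d\phi\|_\infty=\sup|d\phi|$. It is homogeneous if $\phi(\gamma^n)=n\phi(\gamma)$ for all $\gamma\in\Gamma$, $n\in\mathbb Z$. For a map $\mu:\Gamma\to U(1)$, $D(\mu)=\inf\{\sup_\gamma|\mu(\gamma)-\nu(\gamma)|:\nu\in\mathrm{Hom}(\Gamma,U(1))\}$. *)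

theory Defs
  imports Complex_Main "HOL-Algebra.Group"
begin

definition quasimorphism :: "('a, 'b) monoid_scheme \<Rightarrow> ('a \<Rightarrow> real) \<Rightarrow> bool" where
  "quasimorphism G \<phi> \<longleftrightarrow>
     (\<exists>C. \<forall>\<gamma>\<in>carrier G. \<forall>\<eta>\<in>carrier G. \<bar>\<phi> (\<gamma> \<otimes>\<^bsub>G\<^esub> \<eta>) - \<phi> \<gamma> - \<phi> \<eta>\<bar> \<le> C)"

definition homogeneous :: "('a, 'b) monoid_scheme \<Rightarrow> ('a \<Rightarrow> real) \<Rightarrow> bool" where
  "homogeneous G \<phi> \<longleftrightarrow>
     (\<forall>\<gamma>\<in>carrier G. \<forall>n::int. \<phi> (\<gamma> [^]\<^bsub>G\<^esub> n) = of_int n * \<phi> \<gamma>)"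

definition is_hom_real :: "('a, 'b) monoid_scheme \<Rightarrow> ('a \<Rightarrow> real) \<Rightarrow> bool" where
  "is_hom_real G \<phi> \<longleftrightarrow>
     (\<forall>\<gamma>\<in>carrier G. \<forall>\<eta>\<in>carrier G. \<phi> (\<gamma> \<otimes>\<^bsub>G\<^esub> \<eta>) = \<phi> \<gamma> + \<phi> \<eta>)"

definition defect_norm :: "('a, 'b) monoid_scheme \<Rightarrow> ('a \<Rightarrow> real) \<Rightarrow> real" where
  "defect_norm G \<phi> =
     (SUP p\<in>carrier G \<times> carrier G. \<bar>\<phi> (fst p \<otimes>\<^bsub>G\<^esub> snd p) - \<phi> (fst p) - \<phi> (snd p)\<bar>)"

definition U1_hom :: "('a, 'b) monoid_scheme \<Rightarrow> ('a \<Rightarrow> complex) \<Rightarrow> bool" where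
  "U1_hom G \<nu> \<longleftrightarrow> (\<forall>\<gamma>\<in>carrier G. cmod (\<nu> \<gamma>) = 1) \<and>
     (\<forall>\<gamma>\<in>carrier G. \<forall>\<eta>\<in>carrier G. \<nu> (\<gamma> \<otimes>\<^bsub>G\<^esub> \<eta>) = \<nu> \<gamma> * \<nu> \<eta>)"

definition D_dist :: "('a, 'b) monoid_scheme \<Rightarrow> ('a \<Rightarrow> complex) \<Rightarrow> real" where
  "D_dist G \<mu> = (INF \<nu>\<in>{\<nu>. U1_hom G \<nu>}. (SUP \<gamma>\<in>carrier G. cmod (\<mu> \<gamma> - \<nu> \<gamma>)))"

end

theory Submission
  imports Defs
begin
lemma cmod_1_cis: "cmod (1 - cis a) = 2 * \<bar>sin (a/2)\<bar>"
proof -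
  have "(cmod (1 - cis a))^2 = (1 - cos a)^2 + (sin a)^2"
    by (simp add: cmod_power2)
  also have "\<dots> = (2 * \<bar>sin (a/2)\<bar>)^2"
  proof -
    have c1: "cos a = 1 - 2 * (sin (a/2))^2" using cos_double_sin[of "a/2"] by simp
    have s1: "sin a = 2 * sin (a/2) * cos (a/2)" using sin_double[of "a/2"] by simp
    have "(1 - cos a)^2 + (sin a)^2 = 4 * (sin (a/2))^2 * ((sin (a/2))^2 + (cos (a/2))^2)"
    proof -
      have g: "\<And>x y::real. (1-(1-2*x^2))^2 + (2*x*y)^2 = 4*x^2*(x^2+y^2)"
        by (simp add: power2_eq_square algebra_simps)
      show ?thesis unfolding c1 s1 by (rule g)
    qed
    also have "\<dots> = 4 * (sin (a/2))^2" by (simp only: sin_cos_squared_add mult_1_right)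
    finally show ?thesis by (simp add: power_mult_distrib)
  qed
  finally show ?thesis
    by (metis abs_of_nonneg mult_nonneg_nonneg norm_ge_zero power2_eq_imp_eq abs_ge_zero zero_le_numeral)
qed

lemma key_bound:
  assumes "\<bar>a\<bar> \<le> pi" "2 * \<bar>sin (a/2)\<bar> \<le> s" "s \<le> 2"
  shows "\<bar>a\<bar>/2 \<le> arcsin (s/2)"
proof -
  have r: "0 \<le> \<bar>a\<bar>/2" "\<bar>a\<bar>/2 \<le> pi/2" using assms by auto
  have "sin (\<bar>a\<bar>/2) = \<bar>sin (a/2)\<bar>"
  proof (cases "a \<ge> 0")
    case True
    then show ?thesis using r sin_ge_zero[of "a/2"] by simp
  next
    case False
    then show ?thesis using r sin_ge_zero[of "-a/2"] by (simp add: abs_if)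
  qed
  hence "arcsin (\<bar>sin (a/2)\<bar>) = \<bar>a\<bar>/2" using arcsin_sin[of "\<bar>a\<bar>/2"] r by simp
  moreover have "arcsin (\<bar>sin (a/2)\<bar>) \<le> arcsin (s/2)"
    by (rule arcsin_le_arcsin) (use assms in auto)
  ultimately show ?thesis by simp
qed
lemma bounded_hom_eq:
  assumes "\<And>n::nat. \<bar>real n * x\<bar> \<le> t"
  shows "x = 0"
proof (rule ccontr)
  assume "x \<noteq> 0"
  then have p: "\<bar>x\<bar> > 0" by simp
  obtain n :: nat where "t / \<bar>x\<bar> < real n" using reals_Archimedean2 by blast
  then have "t < real n * \<bar>x\<bar>" using p by (simp add: divide_less_eq)
  moreover have "\<bar>real n * x\<bar> = real n * \<bar>x\<bar>" by (simp add: abs_mult)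
  ultimately show False using assms[of n] by simp
qed

theorem lemma2p3:
  fixes G :: "('a, 'b) monoid_scheme" and \<phi> :: "'a \<Rightarrow> real"
  assumes "group G"
    and "quasimorphism G \<phi>"
    and "homogeneous G \<phi>"
    and "\<not> is_hom_real G \<phi>"
  defines "\<mu> \<equiv> (\<lambda>\<gamma>. exp (2 * of_real pi * \<i> * of_real (\<phi> \<gamma>)))"
  shows "3 / pi * arcsin (D_dist G \<mu> / 2) + defect_norm G \<phi> \<ge> 1"
proof -
  interpret group G by fact
  define \<epsilon> where "\<epsilon> = defect_norm G \<phi>"
  define S where "S = (\<lambda>\<nu>. SUP \<gamma>\<in>carrier G. cmod (\<mu> \<gamma> - \<nu> \<gamma>))"
  have mu_cis: "\<mu> \<gamma> = cis (2 * pi * \<phi> \<gamma>)" for \<gamma>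
    unfolding \<mu>_def cis_conv_exp by (simp add: mult_ac)
  have F1: "\<bar>\<phi> (\<gamma> \<otimes>\<^bsub>G\<^esub> \<eta>) - \<phi> \<gamma> - \<phi> \<eta>\<bar> \<le> \<epsilon>"
    if "\<gamma> \<in> carrier G" "\<eta> \<in> carrier G" for \<gamma> \<eta>
  proof -
    obtain C where C: "\<forall>\<gamma>\<in>carrier G. \<forall>\<eta>\<in>carrier G. \<bar>\<phi> (\<gamma> \<otimes>\<^bsub>G\<^esub> \<eta>) - \<phi> \<gamma> - \<phi> \<eta>\<bar> \<le> C"
      using assms(2) unfolding quasimorphism_def by blast
    have bdd: "bdd_above ((\<lambda>p. \<bar>\<phi> (fst p \<otimes>\<^bsub>G\<^esub> snd p) - \<phi> (fst p) - \<phi> (snd p)\<bar>) ` (carrier G \<times> carrier G))"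
      using C by (auto intro!: bdd_aboveI[of _ C])
    show ?thesis unfolding \<epsilon>_def defect_norm_def
      using cSUP_upper[OF _ bdd, of "(\<gamma>, \<eta>)"] that by simp
  qed
  have F2: "cmod (\<mu> \<gamma> - \<nu> \<gamma>) \<le> S \<nu>" "S \<nu> \<le> 2" "0 \<le> S \<nu>"
    if "U1_hom G \<nu>" "\<gamma> \<in> carrier G" for \<nu> \<gamma>
  proof -
    have b: "cmod (\<mu> x - \<nu> x) \<le> 2" if "x \<in> carrier G" for x
    proof -
      have "cmod (\<mu> x - \<nu> x) \<le> cmod (\<mu> x) + cmod (\<nu> x)" by (rule norm_triangle_ineq4)
      also have "\<dots> = 2" using \<open>U1_hom G \<nu>\<close> that by (simp add: U1_hom_def mu_cis)
      finally show ?thesis .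
    qed
    have bdd: "bdd_above ((\<lambda>x. cmod (\<mu> x - \<nu> x)) ` carrier G)"
      using b by (auto intro!: bdd_aboveI[of _ 2])
    show 1: "cmod (\<mu> \<gamma> - \<nu> \<gamma>) \<le> S \<nu>" unfolding S_def
      by (rule cSUP_upper[OF that(2) bdd])
    show "S \<nu> \<le> 2" unfolding S_def
      by (rule cSUP_least) (use b that in auto)
    show "0 \<le> S \<nu>" using 1 norm_ge_zero order_trans by blast
  qed
  have A: "1 \<le> 3 / pi * arcsin (S \<nu> / 2) + \<epsilon>" if hom: "U1_hom G \<nu>" for \<nu>
  proof (rule ccontr)
    assume neg: "\<not> ?thesis"
    define \<theta> where "\<theta> = arcsin (S \<nu> / 2) / pi"
    have lt: "3 * \<theta> + \<epsilon> < 1" using neg unfolding \<theta>_def by simp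
    define a where "a = (\<lambda>\<gamma>. Arg (\<nu> \<gamma> / \<mu> \<gamma>))"
    define \<psi> where "\<psi> = (\<lambda>\<gamma>. \<phi> \<gamma> + a \<gamma> / (2 * pi))"
    have P: "\<nu> \<gamma> = cis (2 * pi * \<psi> \<gamma>) \<and> \<bar>\<psi> \<gamma> - \<phi> \<gamma>\<bar> \<le> \<theta>" if g: "\<gamma> \<in> carrier G" for \<gamma>
    proof -
      have n1: "cmod (\<nu> \<gamma>) = 1" using hom g by (simp add: U1_hom_def)
      have n2: "cmod (\<mu> \<gamma>) = 1" by (simp add: mu_cis)
      define z where "z = \<nu> \<gamma> / \<mu> \<gamma>"
      have nz: "cmod z = 1" using n1 n2 by (simp add: z_def norm_divide)
      hence "z \<noteq> 0" by auto
      from Arg_correct[OF this] have ac: "sgn z = cis (a \<gamma>)" "- pi < a \<gamma>" "a \<gamma> \<le> pi"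
        by (auto simp: a_def z_def)
      have "sgn z = z" using nz by (simp add: sgn_div_norm)
      hence zc: "z = cis (a \<gamma>)" using ac by simp
      have "\<mu> \<gamma> \<noteq> 0" using n2 by auto
      hence nu: "\<nu> \<gamma> = \<mu> \<gamma> * cis (a \<gamma>)" using zc by (simp add: z_def field_simps)
      have "\<nu> \<gamma> = cis (2 * pi * \<phi> \<gamma> + a \<gamma>)" using nu by (simp add: mu_cis cis_mult)
      also have "2 * pi * \<phi> \<gamma> + a \<gamma> = 2 * pi * \<psi> \<gamma>" by (simp add: \<psi>_def field_simps)
      finally have e1: "\<nu> \<gamma> = cis (2 * pi * \<psi> \<gamma>)" .
      have "cmod (\<mu> \<gamma> - \<nu> \<gamma>) = cmod (\<mu> \<gamma> * (1 - cis (a \<gamma>)))" using nu by (simp add: algebra_simps)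
      also have "\<dots> = 2 * \<bar>sin (a \<gamma> / 2)\<bar>" by (simp add: norm_mult n2 cmod_1_cis)
      finally have "2 * \<bar>sin (a \<gamma> / 2)\<bar> \<le> S \<nu>" using F2(1)[OF hom g] by simp
      from key_bound[OF _ this F2(2)[OF hom g]] ac
      have "\<bar>a \<gamma>\<bar> / 2 \<le> arcsin (S \<nu> / 2)" by auto
      hence "\<bar>a \<gamma>\<bar> / (2 * pi) \<le> \<theta>" unfolding \<theta>_def by (simp add: field_simps)
      moreover have "\<bar>\<psi> \<gamma> - \<phi> \<gamma>\<bar> = \<bar>a \<gamma>\<bar> / (2 * pi)" by (simp add: \<psi>_def abs_divide)
      ultimately show ?thesis using e1 by simp
    qed
    have psi_hom: "\<psi> (\<gamma> \<otimes>\<^bsub>G\<^esub> \<eta>) = \<psi> \<gamma> + \<psi> \<eta>" if g: "\<gamma> \<in> carrier G" "\<eta> \<in> carrier G" for \<gamma> \<eta>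
    proof -
      define d where "d = \<psi> (\<gamma> \<otimes>\<^bsub>G\<^esub> \<eta>) - \<psi> \<gamma> - \<psi> \<eta>"
      have "cis (2 * pi * \<psi> (\<gamma> \<otimes>\<^bsub>G\<^esub> \<eta>)) = cis (2 * pi * \<psi> \<gamma>) * cis (2 * pi * \<psi> \<eta>)"
        using P[of "\<gamma> \<otimes>\<^bsub>G\<^esub> \<eta>"] P[of \<gamma>] P[of \<eta>] hom g by (simp add: U1_hom_def)
      hence "cis (2 * pi * d) = 1"
        by (simp add: d_def cis_mult cis_divide[symmetric] algebra_simps)
      hence "cos (2 * pi * d) = 1" by (metis cis.sel(1) one_complex.sel(1))
      then obtain n :: int where "2 * pi * d = real_of_int n * 2 * pi" using cos_one_2pi_int by blast
      hence dn: "d = n" by simp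
      have "\<bar>d\<bar> \<le> \<bar>\<phi> (\<gamma> \<otimes>\<^bsub>G\<^esub> \<eta>) - \<phi> \<gamma> - \<phi> \<eta>\<bar> + \<bar>\<psi> (\<gamma> \<otimes>\<^bsub>G\<^esub> \<eta>) - \<phi> (\<gamma> \<otimes>\<^bsub>G\<^esub> \<eta>)\<bar> + \<bar>\<psi> \<gamma> - \<phi> \<gamma>\<bar> + \<bar>\<psi> \<eta> - \<phi> \<eta>\<bar>"
        unfolding d_def by linarith
      also have "\<dots> \<le> \<epsilon> + \<theta> + \<theta> + \<theta>"
        using F1[OF g] P[of "\<gamma> \<otimes>\<^bsub>G\<^esub> \<eta>"] P[of \<gamma>] P[of \<eta>] g by (intro add_mono) auto
      finally have "\<bar>d\<bar> < 1" using lt by linarith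
      hence "n = 0" using dn by linarith
      thus ?thesis using dn d_def by simp
    qed
    have psi_pow: "\<psi> (\<gamma> [^]\<^bsub>G\<^esub> n) = real n * \<psi> \<gamma>" if g: "\<gamma> \<in> carrier G" for \<gamma> and n :: nat
    proof (induction n)
      case 0
      have "\<psi> \<one>\<^bsub>G\<^esub> = \<psi> \<one>\<^bsub>G\<^esub> + \<psi> \<one>\<^bsub>G\<^esub>" using psi_hom[of "\<one>\<^bsub>G\<^esub>" "\<one>\<^bsub>G\<^esub>"] by simp
      then show ?case by simp
    next
      case (Suc n)
      then show ?case using psi_hom[of "\<gamma> [^]\<^bsub>G\<^esub> n" \<gamma>] g by (simp add: algebra_simps)
    qed
    have eq: "\<phi> \<gamma> = \<psi> \<gamma>" if g: "\<gamma> \<in> carrier G" for \<gamma>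
    proof -
      have "\<bar>real n * (\<phi> \<gamma> - \<psi> \<gamma>)\<bar> \<le> \<theta>" for n :: nat
      proof -
        have "\<phi> (\<gamma> [^]\<^bsub>G\<^esub> n) = real n * \<phi> \<gamma>"
          using assms(3) g unfolding homogeneous_def
          by (metis int_pow_int of_int_of_nat_eq)
        thus ?thesis using P[of "\<gamma> [^]\<^bsub>G\<^esub> n"] psi_pow[OF g, of n] g
          by (simp add: algebra_simps abs_minus_commute)
      qed
      thus ?thesis using bounded_hom_eq by force
    qed
    have "is_hom_real G \<phi>" unfolding is_hom_real_def
      using eq psi_hom by simp
    thus False using assms(4) by simp
  qed
  have hom1: "U1_hom G (\<lambda>_. 1)" by (simp add: U1_hom_def)
  define b where "b = pi * (1 - \<epsilon>) / 3"
  have Ab: "b \<le> arcsin (S \<nu> / 2)" if "U1_hom G \<nu>" for \<nu>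
    using A[OF that] unfolding b_def by (simp add: field_simps)
  have D: "D_dist G \<mu> = (INF \<nu>\<in>{\<nu>. U1_hom G \<nu>}. S \<nu>)" unfolding D_dist_def S_def ..
  have bddb: "bdd_below (S ` {\<nu>. U1_hom G \<nu>})"
    using F2(3) by (auto intro!: bdd_belowI[of _ 0])
  have D0: "0 \<le> D_dist G \<mu>" unfolding D
    by (rule cINF_greatest) (use hom1 F2(3) in auto)
  have D2: "D_dist G \<mu> \<le> 2" unfolding D
    using cINF_lower[OF bddb, of "\<lambda>_. 1"] hom1 F2(2)[OF hom1 one_closed] by simp
  have "b \<le> arcsin (D_dist G \<mu> / 2)"
  proof (cases "b \<le> 0")
    case True
    have "arcsin 0 \<le> arcsin (D_dist G \<mu> / 2)" by (rule arcsin_le_arcsin) (use D0 D2 in auto)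
    then show ?thesis using True by simp
  next
    case False
    have bp: "b \<le> pi/2" using Ab[OF hom1] arcsin_ubound[of "S (\<lambda>_. 1) / 2"] F2(2,3)[OF hom1 one_closed] by simp
    have "2 * sin b \<le> S \<nu>" if h: "U1_hom G \<nu>" for \<nu>
    proof (rule ccontr)
      assume "\<not> ?thesis"
      hence "arcsin (S \<nu> / 2) < arcsin (sin b)"
        using F2(3)[OF h one_closed] sin_le_one[of b] by (intro arcsin_less_arcsin) auto
      also have "\<dots> = b" using bp False by (intro arcsin_sin) auto
      finally show False using Ab[OF h] by simp
    qed
    hence "2 * sin b \<le> D_dist G \<mu>" unfolding D
      by (intro cINF_greatest) (use hom1 in auto)
    hence "arcsin (sin b) \<le> arcsin (D_dist G \<mu> / 2)"
      using False bp sin_ge_zero[of b] D2 by (intro arcsin_le_arcsin) auto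
    also have "arcsin (sin b) = b" using bp False by (intro arcsin_sin) auto
    finally show ?thesis .
  qed
  thus ?thesis unfolding b_def \<epsilon>_def by (simp add: field_simps)
qed
end
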